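(* Let $\mathcal H_A,\mathcal H_B$ be finite-dimensional Hilbert spaces, $U$ a unitary on $\mathcal H_A\otimes\mathcal H_B$, $\alpha,\alpha'$ density operators on $\mathcal H_A$ and $\beta,\beta'$ density operators on $\mathcal H_B$, with at least one of $\alpha,\beta$ not maximally mixed, such that $U(\alpha\otimes\beta)U^\dagger=\alpha'\otimes\beta'$, and assume $\alpha'$ is invertible. Let $\mathcal E[X]=\operatorname{Tr}_B[U(X\otimes\beta)U^\dagger]$. Then $\mathcal E$ is tabletop reversible for the prior $\alpha$; specifically, its Petz recovery map satisfies $$\hat{\mathcal E}_\alpha[X]=\operatorname{Tr}_B\!\left[U^\dagger(X\otimes\beta')U\right]\quad\text{for all operators }X\text{ on }\mathcal H_A.$$
   Context: For a channel $\mathcal E$ and a density operator $\alpha$ with $\mathcal E[\alpha]$ invertible, the Petz recovery map is $\hat{\mathcal E}_\alpha[X]=\sqrt{\alpha}\,\mathcal E^\dagger[\mathcal E[\alpha]^{-1/2}X\mathcal E[\alpha]^{-1/2}]\sqrt\alpha$, where $\mathcal E^\dagger$ is the Hilbert–Schmidt adjoint ($\operatorname{Tr}(\mathcal E[X]Y)=\operatorname{Tr}(X\mathcal E^\dagger[Y])$). A channel $\mathcal E[X]=\operatorname{Tr}_B[U(X\otimes\beta)U^\dagger]$ is tabletop reversible for the prior $\alpha$ if there exists a density operator $\beta'$ on $\mathcal H_B$ with $\hat{\mathcal E}_\alpha[X]=\operatorname{Tr}_B[U^\dagger(X\otimes\beta')U]$ for the same $U$. *)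

theory Defs
  imports "HOL-Analysis.Analysis"
begin

text \<open>Finite-dimensional Hilbert spaces H_A, H_B are modelled as complex^'a and
complex^'b for finite index types 'a, 'b; operators are square matrices.
H_A (x) H_B is complex^('a \<times> 'b).\<close>

definition dagger :: "complex^'n^'m \<Rightarrow> complex^'m^'n" where
  "dagger M = (\<chi> i j. cnj (M $ j $ i))"

definition unitary_mat :: "complex^'n^'n \<Rightarrow> bool" where
  "unitary_mat U \<longleftrightarrow> U ** dagger U = mat 1 \<and> dagger U ** U = mat 1"

definition hermitian_mat :: "complex^'n^'n \<Rightarrow> bool" where
  "hermitian_mat A \<longleftrightarrow> dagger A = A"

definition psd_mat :: "complex^'n^'n \<Rightarrow> bool" where
  "psd_mat A \<longleftrightarrow> hermitian_mat A \<and>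
     (\<forall>v :: complex^'n. 0 \<le> Re (\<Sum>i\<in>UNIV. \<Sum>j\<in>UNIV. cnj (v $ i) * A $ i $ j * v $ j))"

definition density_op :: "complex^'n^'n \<Rightarrow> bool" where
  "density_op A \<longleftrightarrow> psd_mat A \<and> trace A = 1"

definition maximally_mixed :: "complex^'n^'n \<Rightarrow> bool" where
  "maximally_mixed A \<longleftrightarrow> A = mat (1 / of_nat CARD('n))"

definition tensor :: "complex^'a^'a \<Rightarrow> complex^'b^'b \<Rightarrow> complex^('a \<times> 'b)^('a \<times> 'b)" where
  "tensor X Y = (\<chi> p q. X $ fst p $ fst q * Y $ snd p $ snd q)"

definition ptrB :: "complex^('a \<times> 'b::finite)^('a \<times> 'b) \<Rightarrow> complex^'a^'a" where
  "ptrB M = (\<chi> i j. \<Sum>b\<in>(UNIV :: 'b set). M $ (i, b) $ (j, b))"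

definition channel :: "complex^('a \<times> 'b)^('a \<times> 'b) \<Rightarrow> complex^'b^'b::finite
    \<Rightarrow> complex^'a^'a \<Rightarrow> complex^'a^'a" where
  "channel U \<beta> X = ptrB (U ** tensor X \<beta> ** dagger U)"

definition hs_adjoint :: "(complex^'n^'n \<Rightarrow> complex^'m^'m) \<Rightarrow> complex^'m^'m \<Rightarrow> complex^'n^'n" where
  "hs_adjoint E = (THE F. \<forall>X Y. trace (E X ** Y) = trace (X ** F Y))"

definition psd_sqrt :: "complex^'n^'n \<Rightarrow> complex^'n^'n" where
  "psd_sqrt A = (THE S. psd_mat S \<and> S ** S = A)"

definition petz :: "(complex^'n^'n \<Rightarrow> complex^'m^'m) \<Rightarrow> complex^'n^'n
    \<Rightarrow> complex^'m^'m \<Rightarrow> complex^'n^'n" where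
  "petz E \<alpha> X =
     (let R = matrix_inv (psd_sqrt (E \<alpha>))
      in psd_sqrt \<alpha> ** hs_adjoint E (R ** X ** R) ** psd_sqrt \<alpha>)"

definition tabletop_reversible :: "complex^('a \<times> 'b)^('a \<times> 'b) \<Rightarrow> complex^'b^'b::finite
    \<Rightarrow> complex^'a^'a \<Rightarrow> bool" where
  "tabletop_reversible U \<beta> \<alpha> \<longleftrightarrow>
     (\<exists>\<beta>' :: complex^'b^'b. density_op \<beta>' \<and>
        (\<forall>X. petz (channel U \<beta>) \<alpha> X = ptrB (dagger U ** tensor X \<beta>' ** U)))"

end

theory Submission
  imports Defs
begin

lemma sum_UNIV_prod: "(\<Sum>p\<in>(UNIV::('a::finite\<times>'b::finite) set). f p) = (\<Sum>a\<in>UNIV. \<Sum>b\<in>UNIV. f (a,b))"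
  by (simp add: sum.cartesian_product)

lemma mmult_nth: "(A ** B) $ i $ j = (\<Sum>k\<in>UNIV. A$i$k * B$k$j)"
  by (simp add: matrix_matrix_mult_def)
lemma mat_nth: "mat c $ i $ j = (if i = j then c else 0)" by (simp add: mat_def)
lemma dagger_nth: "dagger M $ i $ j = cnj (M $ j $ i)" by (simp add: dagger_def)
lemma tensor_nth: "tensor X Y $ p $ q = X $ fst p $ fst q * Y $ snd p $ snd q" by (simp add: tensor_def)
lemma ptrB_nth: "ptrB M $ i $ j = (\<Sum>b\<in>UNIV. M $ (i, b) $ (j, b))" by (simp add: ptrB_def)

lemma dagger_mult: "dagger (A ** B) = dagger B ** dagger A"
  by (simp add: vec_eq_iff dagger_nth mmult_nth mult.commute)
lemma dagger_dagger[simp]: "dagger (dagger A) = A"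
  by (simp add: vec_eq_iff dagger_nth)
lemma dagger_mat[simp]: "dagger (mat 1) = mat 1"
  by (simp add: vec_eq_iff dagger_nth mat_nth)

lemma tensor_mult: "tensor A B ** tensor C D = tensor (A ** C) (B ** D)"
  apply (simp add: vec_eq_iff tensor_nth mmult_nth sum_UNIV_prod sum_product)
  apply (intro allI sum.cong refl)
  by (simp add: mult_ac)

lemma dagger_tensor: "dagger (tensor A B) = tensor (dagger A) (dagger B)"
  by (simp add: vec_eq_iff dagger_nth tensor_nth)

lemma tensor_id: "tensor (mat 1) (mat 1) = (mat 1 :: complex^('a::finite\<times>'b::finite)^('a\<times>'b))"
  by (auto simp add: vec_eq_iff tensor_nth mat_nth prod_eq_iff)

lemma ptrB_tensor: "trace Y = 1 \<Longrightarrow> ptrB (tensor X Y) = X"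
  by (simp add: vec_eq_iff ptrB_nth tensor_nth trace_def flip: sum_distrib_left)

lemma sum_if_out: "(\<Sum>x\<in>A. if P then f x else 0) = (if P then (\<Sum>x\<in>A. f x) else 0)"
  by simp

lemma rev3: "(\<Sum>a\<in>A. \<Sum>b\<in>B. \<Sum>c\<in>C. f a b c) = (\<Sum>c\<in>C. \<Sum>b\<in>B. \<Sum>a\<in>A. f a b c)"
proof -
  have "(\<Sum>a\<in>A. \<Sum>b\<in>B. \<Sum>c\<in>C. f a b c) = (\<Sum>a\<in>A. \<Sum>c\<in>C. \<Sum>b\<in>B. f a b c)"
    by (rule sum.cong[OF refl], rule sum.swap)
  also have "\<dots> = (\<Sum>c\<in>C. \<Sum>a\<in>A. \<Sum>b\<in>B. f a b c)" by (rule sum.swap)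
  also have "\<dots> = (\<Sum>c\<in>C. \<Sum>b\<in>B. \<Sum>a\<in>A. f a b c)"
    by (rule sum.cong[OF refl], rule sum.swap)
  finally show ?thesis .
qed

lemma ptrB_left: "ptrB (tensor A (mat 1) ** M) = A ** ptrB M"
  apply (simp add: vec_eq_iff ptrB_nth tensor_nth mmult_nth sum_UNIV_prod mat_nth 
     sum_distrib_left sum_distrib_right if_distrib if_distribR sum_if_out cong: if_cong)
  apply (intro allI)
  apply (subst sum.swap) 
  by (simp add: mult_ac)

lemma ptrB_right: "ptrB (M ** tensor B (mat 1)) = ptrB M ** B"
  apply (simp add: vec_eq_iff ptrB_nth tensor_nth mmult_nth sum_UNIV_prod mat_nth 
     sum_distrib_left sum_distrib_right if_distrib if_distribR sum_if_out cong: if_cong)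
  apply (intro allI)
  apply (subst sum.swap) 
  by (simp add: mult_ac)

lemma ptrB_left_right: "ptrB (tensor A (mat 1) ** M ** tensor B (mat 1)) = A ** ptrB M ** B"
  by (simp add: ptrB_left ptrB_right matrix_mul_assoc)

lemma ptrB_cyc: "ptrB (tensor (mat 1) B ** M) = ptrB (M ** tensor (mat 1) B)"
  apply (simp add: vec_eq_iff ptrB_nth tensor_nth mmult_nth sum_UNIV_prod mat_nth 
     sum_distrib_left sum_distrib_right if_distrib if_distribR sum_if_out cong: if_cong)
  apply (intro allI)
  apply (subst sum.swap) 
  by (simp add: mult_ac)

lemma trace_ptrB: "trace (Y ** ptrB M) = trace (tensor Y (mat 1) ** M)"
  apply (simp add: trace_def ptrB_nth tensor_nth mmult_nth sum_UNIV_prod mat_nth 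
     sum_distrib_left sum_distrib_right if_distrib if_distribR sum_if_out cong: if_cong)
  apply (subst sum.swap) 
  by (simp add: mult_ac)

definition cinner :: "complex^'n \<Rightarrow> complex^'n \<Rightarrow> complex" where
  "cinner u v = (\<Sum>i\<in>UNIV. cnj (u$i) * v$i)"

lemma qf_cinner: "(\<Sum>i\<in>UNIV. \<Sum>j\<in>UNIV. cnj (v $ i) * A $ i $ j * v $ j) = cinner v (A *v v)"
  by (simp add: cinner_def matrix_vector_mult_def sum_distrib_left mult.assoc)

lemma psd_matD: "psd_mat A \<Longrightarrow> 0 \<le> Re (cinner v (A *v v))"
  unfolding psd_mat_def qf_cinner by blast

lemma psd_herm: "psd_mat A \<Longrightarrow> hermitian_mat A"
  unfolding psd_mat_def by blast

lemma psd_matI: "hermitian_mat A \<Longrightarrow> (\<And>v. 0 \<le> Re (cinner v (A *v v))) \<Longrightarrow> psd_mat A"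
  unfolding psd_mat_def qf_cinner by blast

lemma hermitian_nth: "hermitian_mat A \<Longrightarrow> A $ i $ j = cnj (A $ j $ i)"
  unfolding hermitian_mat_def by (metis dagger_nth)

lemma hermitian_cnj: "hermitian_mat A \<Longrightarrow> cnj (A $ i $ j) = A $ j $ i"
  unfolding hermitian_mat_def by (metis dagger_nth)

lemma scaleR_nth: "(r *\<^sub>R x) $ i = complex_of_real r * (x $ i :: complex)"
  unfolding vector_scaleR_component by (rule scaleR_conv_of_real)

lemma cscaleR: "r *\<^sub>R (z::complex) = complex_of_real r * z"
  by (rule scaleR_conv_of_real)

lemma cinner_add_right: "cinner u (v + w) = cinner u v + cinner u w"
  by (simp add: cinner_def sum.distrib distrib_left)
lemma cinner_diff_right: "cinner u (v - w) = cinner u v - cinner u w"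
  by (simp add: cinner_def sum_subtractf right_diff_distrib)
lemma cinner_diff_left: "cinner (u - v) w = cinner u w - cinner v w"
  by (simp add: cinner_def sum_subtractf left_diff_distrib)
lemma cinner_scaleR_right: "cinner u (r *\<^sub>R v) = complex_of_real r * cinner u v"
  by (simp add: cinner_def sum_distrib_left cscaleR mult_ac)
lemma cinner_scaleR_left: "cinner (r *\<^sub>R u) v = complex_of_real r * cinner u v"
  by (simp add: cinner_def sum_distrib_left cscaleR mult_ac)
lemma cinner_commute: "cinner v u = cnj (cinner u v)"
  by (simp add: cinner_def mult.commute)
lemma cinner_zero_left[simp]: "cinner 0 u = 0"
  by (simp add: cinner_def)
lemma cinner_zero_right[simp]: "cinner u 0 = 0"
  by (simp add: cinner_def)

lemma cinner_self: "cinner v v = complex_of_real ((norm v)\<^sup>2)"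
proof -
  have "cinner v v = (\<Sum>i\<in>UNIV. complex_of_real ((norm (v$i))\<^sup>2))"
    unfolding cinner_def
    by (intro sum.cong refl) (metis complex_norm_square mult.commute)
  also have "\<dots> = complex_of_real (\<Sum>i\<in>UNIV. (norm (v$i))\<^sup>2)" by simp
  also have "(\<Sum>i\<in>UNIV. (norm (v$i))\<^sup>2) = (norm v)\<^sup>2"
    by (simp add: power2_norm_eq_inner inner_vec_def)
  finally show ?thesis .
qed

lemma mv_scaleR: "(A::complex^'n^'m) *v (r *\<^sub>R x) = r *\<^sub>R (A *v x)"
  by (simp add: vec_eq_iff matrix_vector_mult_def cscaleR sum_distrib_left mult_ac)

lemma herm_cinner:
  assumes "hermitian_mat A"
  shows "cinner u (A *v v) = cinner (A *v u) v"
proof -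
  have "cinner u (A *v v) = (\<Sum>i\<in>UNIV. \<Sum>j\<in>UNIV. cnj (u$i) * A$i$j * v$j)"
    by (simp add: cinner_def matrix_vector_mult_def sum_distrib_left mult.assoc)
  also have "\<dots> = (\<Sum>j\<in>UNIV. \<Sum>i\<in>UNIV. cnj (u$i) * A$i$j * v$j)" by (rule sum.swap)
  also have "\<dots> = cinner (A *v u) v"
    unfolding cinner_def matrix_vector_mult_def
    by (simp add: sum_distrib_right sum_distrib_left hermitian_cnj[OF assms] mult_ac)
  finally show ?thesis .
qed

lemma zero_lemma:
  fixes B :: "complex^'n^'n"
  assumes H: "hermitian_mat B"
    and nn: "\<And>t::real. 0 \<le> Re (cinner (x - t *\<^sub>R (B *v x)) (B *v (x - t *\<^sub>R (B *v x))))"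
    and z: "Re (cinner x (B *v x)) = 0"
  shows "B *v x = 0"
proof -
  define z where "z = B *v x"
  define c where "c = Re (cinner z (B *v z))"
  define s where "s = (norm z)\<^sup>2"
  have e1: "cinner x (B *v z) = cinner z z" using herm_cinner[OF H, of x z] by (simp add: z_def)
  have e2: "cinner z (B *v x) = cinner z z" by (simp add: z_def)
  have exp: "Re (cinner (x - t *\<^sub>R z) (B *v (x - t *\<^sub>R z))) = - 2 * t * s + t\<^sup>2 * c" for t
  proof -
    have "cinner (x - t *\<^sub>R z) (B *v (x - t *\<^sub>R z)) =
       cinner x (B *v x) - complex_of_real t * cinner x (B *v z) - complex_of_real t * cinner z (B *v x)
        + complex_of_real t * complex_of_real t * cinner z (B *v z)"
      by (simp add: matrix_vector_mult_diff_distrib mv_scaleR cinner_diff_left cinner_diff_right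
          cinner_scaleR_left cinner_scaleR_right algebra_simps)
    then show ?thesis using z
      by (simp add: e1 e2 cinner_self s_def c_def power2_eq_square)
  qed
  have ineq: "0 \<le> - 2 * t * s + t\<^sup>2 * c" for t
    using nn[of t] exp[of t] by (simp add: z_def)
  have s0: "s \<ge> 0" by (simp add: s_def)
  have "s = 0"
  proof (rule ccontr)
    assume "s \<noteq> 0"
    hence sp: "s > 0" using s0 by simp
    define t where "t = s / (\<bar>c\<bar> + 1)"
    have tp: "t > 0" using sp by (simp add: t_def)
    have "t * c \<le> t * \<bar>c\<bar>" using tp by (simp add: mult_left_mono)
    also have "t * \<bar>c\<bar> < s" using sp by (simp add: t_def field_simps)
    finally have "t * c < s" .
    hence "t * (t * c) < t * s" using tp by simp
    hence "t\<^sup>2 * c < 2 * t * s" using tp sp by (simp add: power2_eq_square mult_ac)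
    with ineq[of t] show False by simp
  qed
  thus ?thesis by (simp add: s_def z_def)
qed

lemma exists_orth:
  fixes v :: "'n::finite \<Rightarrow> complex^'n"
  assumes "K \<noteq> UNIV"
  shows "\<exists>x. x \<noteq> 0 \<and> (\<forall>i\<in>K. cinner (v i) x = 0)"
proof (rule ccontr)
  assume nex: "\<not> ?thesis"
  define P :: "complex^'n^'n" where "P = (\<chi> i j. if i \<in> K then cnj (v i $ j) else 0)"
  have Pv: "P *v x = (\<chi> i. if i \<in> K then cinner (v i) x else 0)" for x
    by (simp add: vec_eq_iff P_def matrix_vector_mult_def cinner_def)
  have "\<forall>x. P *v x = 0 \<longrightarrow> x = 0"
  proof (intro allI impI)
    fix x assume "P *v x = 0"
    have "cinner (v i) x = 0" if "i \<in> K" for i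
    proof -
      have "(P *v x) $ i = 0" using \<open>P *v x = 0\<close> by simp
      thus ?thesis unfolding Pv using that by simp
    qed
    hence "\<forall>i\<in>K. cinner (v i) x = 0" by blast
    thus "x = 0" using nex by blast
  qed
  then obtain B where "B ** P = mat 1" using matrix_left_invertible_ker by blast
  hence PB: "P ** B = mat 1" using matrix_left_right_inverse by blast
  obtain j where j: "j \<notin> K" using assms by blast
  define e :: "complex^'n" where "e = (\<chi> i. if i = j then 1 else 0)"
  have "P *v (B *v e) = e" by (simp add: matrix_vector_mul_assoc PB)
  hence "(P *v (B *v e)) $ j = 1" by (simp add: e_def)
  moreover have "(P *v (B *v e)) $ j = 0" unfolding Pv using j by simp
  ultimately show False by simp
qed

lemma eigen_step:
  fixes A :: "complex^'n::finite^'n" and v :: "'n \<Rightarrow> complex^'n" and l :: "'n \<Rightarrow> real"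
  assumes H: "hermitian_mat A" and K: "K \<noteq> UNIV"
    and ev: "\<forall>i\<in>K. A *v v i = l i *\<^sub>R v i"
  shows "\<exists>x m. cinner x x = 1 \<and> (\<forall>i\<in>K. cinner (v i) x = 0) \<and> A *v x = m *\<^sub>R x"
proof -
  define W where "W = {x. \<forall>i\<in>K. cinner (v i) x = 0}"
  have Winv: "A *v x \<in> W" if "x \<in> W" for x
  proof -
    have "cinner (v i) (A *v x) = 0" if "i \<in> K" for i
    proof -
      have "cinner (v i) (A *v x) = cinner (A *v v i) x" by (rule herm_cinner[OF H])
      also have "\<dots> = complex_of_real (l i) * cinner (v i) x"
        using ev that by (simp add: cinner_scaleR_left)
      finally show ?thesis using \<open>x \<in> W\<close> that by (simp add: W_def)
    qed
    thus ?thesis by (simp add: W_def)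
  qed
  have Wdiff: "x - y \<in> W" if "x \<in> W" "y \<in> W" for x y
    using that by (simp add: W_def cinner_diff_right)
  have Wscale: "r *\<^sub>R x \<in> W" if "x \<in> W" for x r
    using that by (simp add: W_def cinner_scaleR_right)
  define C where "C = W \<inter> {x. norm x = 1}"
  define f where "f x = Re (cinner x (A *v x))" for x
  obtain x1 where x1: "x1 \<noteq> 0" "x1 \<in> W" using exists_orth[OF K, of v] by (auto simp: W_def)
  have "(1 / norm x1) *\<^sub>R x1 \<in> C" using x1 Wscale by (simp add: C_def)
  hence Cne: "C \<noteq> {}" by blast
  have clW: "closed W"
  proof -
    have "W = (\<Inter>i\<in>K. {x. cinner (v i) x = 0})" by (auto simp: W_def)
    moreover have "closed {x. cinner (v i) x = 0}" for i
      unfolding cinner_def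
      by (rule closed_Collect_eq) (intro continuous_intros)+
    ultimately show ?thesis by (simp add: closed_INT)
  qed
  have "closed {x :: complex^'n. norm x = 1}"
    by (rule closed_Collect_eq) (intro continuous_intros)+
  hence clC: "closed C" using clW by (simp add: C_def closed_Int)
  have "bounded C" unfolding C_def bounded_iff by auto
  hence cC: "compact C" using clC by (simp add: compact_eq_bounded_closed)
  have "continuous_on C f"
    unfolding f_def cinner_def matrix_vector_mult_def
    by (intro continuous_intros)
  then obtain x0 where x0: "x0 \<in> C" and mx: "\<forall>y\<in>C. f y \<le> f x0"
    using continuous_attains_sup[OF cC Cne] by blast
  define m where "m = f x0"
  have fscale: "f (r *\<^sub>R y) = r\<^sup>2 * f y" for r y
    by (simp add: f_def mv_scaleR cinner_scaleR_left cinner_scaleR_right power2_eq_square)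
  have bound: "f y \<le> m * (norm y)\<^sup>2" if "y \<in> W" for y
  proof (cases "y = 0")
    case True thus ?thesis by (simp add: f_def)
  next
    case False
    define y' where "y' = (1 / norm y) *\<^sub>R y"
    have "y' \<in> C" using False that Wscale by (simp add: C_def y'_def)
    hence "f y' \<le> m" using mx by (simp add: m_def)
    moreover have "f y' = f y / (norm y)\<^sup>2" by (simp add: y'_def fscale power_divide)
    ultimately show ?thesis using False by (simp add: field_simps)
  qed
  define B :: "complex^'n^'n" where "B = mat (complex_of_real m) - A"
  have matv: "mat (complex_of_real m) *v x = m *\<^sub>R x" for x :: "complex^'n"
    by (simp add: vec_eq_iff matrix_vector_mult_def mat_def scaleR_nth cscaleR if_distrib if_distribR cong: if_cong)
  have Bv: "B *v x = m *\<^sub>R x - A *v x" for x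
    by (simp add: B_def matrix_vector_mult_diff_rdistrib matv)
  have HB: "hermitian_mat B"
    using H unfolding hermitian_mat_def B_def
    by (simp add: vec_eq_iff dagger_nth mat_def)
  have fB: "Re (cinner y (B *v y)) = m * (norm y)\<^sup>2 - f y" for y
    by (simp add: Bv cinner_diff_right cinner_scaleR_right cinner_self f_def)
  have x0W: "x0 \<in> W" and nx0: "norm x0 = 1" using x0 by (auto simp: C_def)
  have BW: "B *v x \<in> W" if "x \<in> W" for x
    using Wdiff[OF Wscale[OF that] Winv[OF that]] by (simp add: Bv)
  have "B *v x0 = 0"
  proof (rule zero_lemma[OF HB])
    fix t :: real
    have "x0 - t *\<^sub>R (B *v x0) \<in> W" using Wdiff[OF x0W Wscale[OF BW[OF x0W]]] .
    thus "0 \<le> Re (cinner (x0 - t *\<^sub>R (B *v x0)) (B *v (x0 - t *\<^sub>R (B *v x0))))"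
      using fB bound by simp
  next
    show "Re (cinner x0 (B *v x0)) = 0" using fB nx0 by (simp add: m_def)
  qed
  hence "A *v x0 = m *\<^sub>R x0" by (simp add: Bv)
  moreover have "cinner x0 x0 = 1" using nx0 by (simp add: cinner_self)
  ultimately show ?thesis using x0W by (auto simp: W_def)
qed

lemma spectral_K:
  fixes A :: "complex^'n::finite^'n" and K :: "'n set"
  assumes H: "hermitian_mat A" and fin: "finite K"
  shows "\<exists>v l. (\<forall>i\<in>K. \<forall>j\<in>K. cinner (v i) (v j) = (if i = j then 1 else 0)) \<and>
               (\<forall>i\<in>K. A *v v i = (l i :: real) *\<^sub>R v i)"
  using fin
proof (induction K rule: finite_induct)
  case empty
  show ?case by auto
next
  case (insert j K)
  then obtain v l where on: "\<forall>i\<in>K. \<forall>j\<in>K. cinner (v i) (v j) = (if i = j then 1 else 0)"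
    and ev: "\<forall>i\<in>K. A *v v i = (l i :: real) *\<^sub>R v i" by blast
  have "K \<noteq> UNIV" using insert(2) by blast
  from eigen_step[OF H this ev] obtain x m where x: "cinner x x = 1"
    "\<forall>i\<in>K. cinner (v i) x = 0" "A *v x = m *\<^sub>R x" by blast
  have x': "\<forall>i\<in>K. cinner x (v i) = 0" using x(2) cinner_commute by (metis complex_cnj_zero)
  define v' where "v' = v(j := x)"
  define l' where "l' = l(j := m)"
  have "\<forall>i\<in>insert j K. \<forall>k\<in>insert j K. cinner (v' i) (v' k) = (if i = k then 1 else 0)"
    using on x x' insert(2) by (auto simp: v'_def)
  moreover have "\<forall>i\<in>insert j K. A *v v' i = l' i *\<^sub>R v' i"
    using ev x insert(2) by (auto simp: v'_def l'_def)
  ultimately show ?case by blast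
qed

definition diagm :: "('n \<Rightarrow> real) \<Rightarrow> complex^'n^'n" where
  "diagm l = (\<chi> i j. if i = j then complex_of_real (l i) else 0)"

lemma spectral:
  fixes A :: "complex^'n::finite^'n"
  assumes H: "hermitian_mat A"
  shows "\<exists>(Q::complex^'n^'n) l. dagger Q ** Q = mat 1 \<and> Q ** dagger Q = mat 1 \<and> A = Q ** diagm l ** dagger Q
     \<and> (psd_mat A \<longrightarrow> (\<forall>i. l i \<ge> 0))"
proof -
  obtain v :: "'n \<Rightarrow> complex^'n" and l :: "'n \<Rightarrow> real" where on: "\<forall>i. \<forall>j. cinner (v i) (v j) = (if i = j then 1 else 0)"
    and ev: "\<forall>i. A *v v i = (l i :: real) *\<^sub>R v i"
    using spectral_K[OF H, of UNIV] by auto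
  define Q :: "complex^'n^'n" where "Q = (\<chi> r c. v c $ r)"
  have QQ: "dagger Q ** Q = mat 1"
    using on by (simp add: vec_eq_iff Q_def dagger_nth mmult_nth mat_def cinner_def)
  hence QQ': "Q ** dagger Q = mat 1" using matrix_left_right_inverse by blast
  have AQ: "A ** Q = Q ** diagm l"
  proof -
    have "(A ** Q) $ r $ c = (A *v v c) $ r" for r c
      by (simp add: Q_def mmult_nth matrix_vector_mult_def)
    moreover have "(Q ** diagm l) $ r $ c = (l c *\<^sub>R v c) $ r" for r c
      by (simp add: Q_def mmult_nth diagm_def scaleR_nth cscaleR if_distrib if_distribR mult.commute cong: if_cong)
    ultimately show ?thesis using ev by (simp add: vec_eq_iff)
  qed
  have "A = A ** (Q ** dagger Q)" by (simp add: QQ')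
  also have "\<dots> = Q ** diagm l ** dagger Q" by (simp add: matrix_mul_assoc AQ)
  finally have Aeq: "A = Q ** diagm l ** dagger Q" .
  have "l i \<ge> 0" if "psd_mat A" for i
  proof -
    have "0 \<le> Re (cinner (v i) (A *v v i))" by (rule psd_matD[OF that])
    also have "cinner (v i) (A *v v i) = complex_of_real (l i)"
      using ev on by (simp add: cinner_scaleR_right)
    finally show ?thesis by simp
  qed
  hence "psd_mat A \<longrightarrow> (\<forall>i. l i \<ge> 0)" by blast
  thus ?thesis using QQ QQ' Aeq by blast
qed

lemma if0_mult: "(if P then x else 0) * (y::complex) = (if P then x * y else 0)" by simp
lemma mult_if0: "(y::complex) * (if P then x else 0) = (if P then y * x else 0)" by simp
lemma diagm_mult: "diagm a ** diagm b = diagm (\<lambda>i. a i * b i)"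
  by (simp add: vec_eq_iff diagm_def mmult_nth if0_mult mult_if0)

lemma dagger_diagm: "dagger (diagm a) = diagm a"
  by (simp add: vec_eq_iff diagm_def dagger_nth)

lemma herm_sq_psd:
  assumes H: "hermitian_mat H"
  shows "psd_mat (H ** H)"
proof (rule psd_matI)
  show "hermitian_mat (H ** H)"
    using H by (simp add: hermitian_mat_def dagger_mult)
  fix x
  have "cinner x ((H ** H) *v x) = cinner (H *v x) (H *v x)"
    using herm_cinner[OF H, of x "H *v x"] by (simp flip: matrix_vector_mul_assoc)
  thus "0 \<le> Re (cinner x ((H ** H) *v x))" by (simp add: cinner_self)
qed

lemma conj_diag_herm: "hermitian_mat (Q ** diagm a ** dagger Q)"
  by (simp add: hermitian_mat_def dagger_mult dagger_diagm matrix_mul_assoc)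

lemma psd_sqrt_exists:
  fixes A :: "complex^'n::finite^'n"
  assumes P: "psd_mat A"
  shows "\<exists>S. psd_mat S \<and> S ** S = A"
proof -
  obtain Q :: "complex^'n^'n" and l where QQ: "dagger Q ** Q = mat 1" and Aeq: "A = Q ** diagm l ** dagger Q"
    and lnn: "\<forall>i. l i \<ge> 0"
    using spectral[OF psd_herm[OF P]] P by blast
  have sq: "(Q ** diagm a ** dagger Q) ** (Q ** diagm b ** dagger Q) = Q ** diagm (\<lambda>i. a i * b i) ** dagger Q"
    for a b
  proof -
    have "(Q ** diagm a ** dagger Q) ** (Q ** diagm b ** dagger Q) =
       Q ** diagm a ** (dagger Q ** Q) ** diagm b ** dagger Q" by (simp add: matrix_mul_assoc)
    also have "\<dots> = Q ** (diagm a ** diagm b) ** dagger Q" by (simp add: QQ matrix_mul_assoc)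
    finally show ?thesis by (simp add: diagm_mult)
  qed
  define H where "H = Q ** diagm (\<lambda>i. sqrt (sqrt (l i))) ** dagger Q"
  define S where "S = H ** H"
  have S: "S = Q ** diagm (\<lambda>i. sqrt (l i)) ** dagger Q"
    unfolding S_def H_def sq using lnn by simp
  have "psd_mat S" unfolding S_def by (rule herm_sq_psd) (simp add: H_def conj_diag_herm)
  moreover have "S ** S = A" unfolding S sq Aeq using lnn by simp
  ultimately show ?thesis by blast
qed

lemma trace_dag: "trace (dagger M ** S ** M) = (\<Sum>k\<in>UNIV. cinner (column k M) (S *v column k M))"
  unfolding trace_def
  apply (simp add: mmult_nth dagger_nth cinner_def column_def matrix_vector_mult_def
      sum_distrib_left sum_distrib_right mult.assoc)
  apply (rule sum.cong[OF refl])
  by (rule sum.swap)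

lemma psd_zero: 
  assumes P: "psd_mat S" and z: "Re (cinner x (S *v x)) = 0"
  shows "S *v x = 0"
  by (rule zero_lemma[OF psd_herm[OF P] psd_matD[OF P] z])

lemma psd_trace_nn: "psd_mat S \<Longrightarrow> 0 \<le> Re (trace (dagger M ** S ** M))"
  unfolding trace_dag Re_sum by (intro sum_nonneg psd_matD)

lemma psd_trace_zero:
  assumes P: "psd_mat S" and z: "Re (trace (dagger M ** S ** M)) = 0"
  shows "S ** M = 0"
proof -
  have "\<forall>k\<in>UNIV. Re (cinner (column k M) (S *v column k M)) = 0"
    using z unfolding trace_dag Re_sum
    by (subst sum_nonneg_eq_0_iff[symmetric]) (auto intro: psd_matD[OF P])
  hence Sc: "S *v column k M = 0" for k using psd_zero[OF P] by blast
  have "(S ** M) $ i $ k = 0" for i k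
    using arg_cong[OF Sc[of k], of "\<lambda>v. v $ i"]
    by (simp add: mmult_nth matrix_vector_mult_def column_def)
  thus ?thesis by (simp add: vec_eq_iff)
qed

lemma psd_id: "psd_mat (mat 1 :: complex^'n::finite^'n)"
proof -
  have "hermitian_mat (mat 1 :: complex^'n^'n)" by (simp add: hermitian_mat_def)
  from herm_sq_psd[OF this] show ?thesis by simp
qed

lemma mat_diff_ldistrib: "(A::complex^'n::finite^'m) ** (B - C) = A ** B - A ** C"
  by (simp add: vec_eq_iff mmult_nth right_diff_distrib sum_subtractf)
lemma mat_diff_rdistrib: "((A::complex^'n::finite^'m) - B) ** (C::complex^'k^'n) = A ** C - B ** C"
  by (simp add: vec_eq_iff mmult_nth left_diff_distrib sum_subtractf)
lemma dagger_diff: "dagger (A - B) = dagger A - dagger B"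
  by (simp add: vec_eq_iff dagger_nth)
lemma trace_neg: "trace (- (A::complex^'n^'n)) = - trace A"
  by (simp add: trace_def sum_negf)
lemma mat_neg_left: "(- (A::complex^'n::finite^'m)) ** (C::complex^'k^'n) = - (A ** C)"
  by (simp add: vec_eq_iff mmult_nth sum_negf)

lemma psd_sqrt_unique:
  fixes S T :: "complex^'n::finite^'n"
  assumes S: "psd_mat S" and T: "psd_mat T" and eq: "S ** S = T ** T"
  shows "S = T"
proof -
  define D where "D = S - T"
  have HD: "dagger D = D" using psd_herm[OF S] psd_herm[OF T]
    by (simp add: D_def dagger_diff hermitian_mat_def)
  have SDT: "S ** D = - (D ** T)"
    using eq by (simp add: D_def mat_diff_ldistrib mat_diff_rdistrib matrix_mul_assoc)
  have "trace (dagger D ** S ** D) = trace (D ** (S ** D))" by (simp add: HD matrix_mul_assoc)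
  also have "\<dots> = trace ((S ** D) ** D)" by (rule trace_mul_sym)
  also have "\<dots> = - trace (D ** T ** D)" by (simp add: SDT mat_neg_left trace_neg)
  also have "\<dots> = - trace (dagger D ** T ** D)" by (simp add: HD)
  finally have tr: "trace (dagger D ** S ** D) = - trace (dagger D ** T ** D)" .
  have n1: "0 \<le> Re (trace (dagger D ** S ** D))" by (rule psd_trace_nn[OF S])
  have n2: "0 \<le> Re (trace (dagger D ** T ** D))" by (rule psd_trace_nn[OF T])
  have z1: "Re (trace (dagger D ** S ** D)) = 0" and z2: "Re (trace (dagger D ** T ** D)) = 0"
    using n1 n2 tr by auto
  have SD: "S ** D = 0" by (rule psd_trace_zero[OF S z1])
  have TD: "T ** D = 0" by (rule psd_trace_zero[OF T z2])
  have "D ** D = S ** D - T ** D" by (metis D_def mat_diff_rdistrib)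
  hence "D ** D = 0" by (simp add: SD TD)
  hence "Re (trace (dagger D ** mat 1 ** D)) = 0" by (simp add: HD trace_def)
  from psd_trace_zero[OF psd_id this] have "D = 0" by simp
  thus ?thesis by (simp add: D_def)
qed

lemma psd_sqrt_prop:
  assumes "psd_mat A"
  shows "psd_mat (psd_sqrt A) \<and> psd_sqrt A ** psd_sqrt A = A"
proof -
  obtain S where S: "psd_mat S" "S ** S = A" using psd_sqrt_exists[OF assms] by blast
  have "psd_sqrt A = S" unfolding psd_sqrt_def
    by (rule the_equality) (use S psd_sqrt_unique in auto)
  thus ?thesis using S by simp
qed

lemma psd_sqrt_eq:
  assumes "psd_mat S" "S ** S = A"
  shows "psd_sqrt A = S"
  using psd_sqrt_unique[OF psd_sqrt_prop[of A, THEN conjunct1] assms(1)] psd_sqrt_prop[of A] assms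
  by (metis herm_sq_psd psd_herm)

lemma density_psd: "density_op A \<Longrightarrow> psd_mat A"
  by (simp add: density_op_def)

lemma matrix_inv_props:
  assumes "invertible (A::complex^'n::finite^'n)"
  shows "A ** matrix_inv A = mat 1 \<and> matrix_inv A ** A = mat 1"
  using assms unfolding invertible_def matrix_inv_def by (rule someI_ex)

lemma herm_tensor: "hermitian_mat A \<Longrightarrow> hermitian_mat B \<Longrightarrow> hermitian_mat (tensor A B)"
  by (simp add: hermitian_mat_def dagger_tensor)

lemma trace_elem: "trace ((\<chi> i j. if i = q \<and> j = p then 1 else 0) ** (M::complex^'n::finite^'n)) = M $ p $ q"
proof -
  have "trace ((\<chi> i j. if i = q \<and> j = p then 1 else 0) ** M) = (\<Sum>i\<in>UNIV. \<Sum>k\<in>UNIV. if i = q then (if k = p then M $ k $ i else 0) else 0)"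
    unfolding trace_def mmult_nth by (intro sum.cong refl) simp
  also have "\<dots> = M $ p $ q" by (simp add: sum_if_out)
  finally show ?thesis .
qed

lemma hs_adjoint_eq:
  assumes "\<forall>X Y. trace (E X ** Y) = trace (X ** F Y)"
  shows "hs_adjoint E = (F :: complex^'m::finite^'m \<Rightarrow> complex^'n::finite^'n)"
  unfolding hs_adjoint_def
proof (rule the_equality)
  show "\<forall>X Y. trace (E X ** Y) = trace (X ** F Y)" by fact
next
  fix G :: "complex^'m^'m \<Rightarrow> complex^'n^'n"
  assume G: "\<forall>X Y. trace (E X ** Y) = trace (X ** G Y)"
  show "G = F"
  proof (rule ext)
    fix Y
    have "trace (X ** G Y) = trace (X ** F Y)" for X using G assms by metis
    from this[of "\<chi> i j. if i = q \<and> j = p then 1 else 0" for p q]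
    have "G Y $ p $ q = F Y $ p $ q" for p q by (simp add: trace_elem)
    thus "G Y = F Y" by (simp add: vec_eq_iff)
  qed
qed

theorem theorem3:
  fixes U :: "complex^('a::finite \<times> 'b::finite)^('a \<times> 'b)"
    and \<alpha> \<alpha>' :: "complex^'a^'a"
    and \<beta> \<beta>' :: "complex^'b^'b"
  assumes "unitary_mat U"
    and "density_op \<alpha>" and "density_op \<alpha>'"
    and "density_op \<beta>" and "density_op \<beta>'"
    and "\<not> maximally_mixed \<alpha> \<or> \<not> maximally_mixed \<beta>"
    and "U ** tensor \<alpha> \<beta> ** dagger U = tensor \<alpha>' \<beta>'"
    and "invertible \<alpha>'"
  shows "tabletop_reversible U \<beta> \<alpha> \<and>
         (\<forall>X. petz (channel U \<beta>) \<alpha> X = ptrB (dagger U ** tensor X \<beta>' ** U))"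
proof -
  note Uu = assms(1) and dA = assms(2) and dA' = assms(3) and dB = assms(4) and dB' = assms(5)
    and conj = assms(7) and inv = assms(8)
  have UU: "dagger U ** U = mat 1" and UU': "U ** dagger U = mat 1"
    using Uu by (auto simp: unitary_mat_def)
  define Sa where "Sa = psd_sqrt \<alpha>"
  define Sb where "Sb = psd_sqrt \<beta>"
  define Sa' where "Sa' = psd_sqrt \<alpha>'"
  define Sb' where "Sb' = psd_sqrt \<beta>'"
  have Sa: "psd_mat Sa" "Sa ** Sa = \<alpha>" using psd_sqrt_prop[OF density_psd[OF dA]] by (auto simp: Sa_def)
  have Sb: "psd_mat Sb" "Sb ** Sb = \<beta>" using psd_sqrt_prop[OF density_psd[OF dB]] by (auto simp: Sb_def)
  have Sa': "psd_mat Sa'" "Sa' ** Sa' = \<alpha>'" using psd_sqrt_prop[OF density_psd[OF dA']] by (auto simp: Sa'_def)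
  have Sb': "psd_mat Sb'" "Sb' ** Sb' = \<beta>'" using psd_sqrt_prop[OF density_psd[OF dB']] by (auto simp: Sb'_def)
  define Ha where "Ha = psd_sqrt Sa"
  define Hb where "Hb = psd_sqrt Sb"
  define Ha' where "Ha' = psd_sqrt Sa'"
  define Hb' where "Hb' = psd_sqrt Sb'"
  have Ha: "hermitian_mat Ha" "Ha ** Ha = Sa" using psd_sqrt_prop[OF Sa(1)] psd_herm by (auto simp: Ha_def)
  have Hb: "hermitian_mat Hb" "Hb ** Hb = Sb" using psd_sqrt_prop[OF Sb(1)] psd_herm by (auto simp: Hb_def)
  have Ha': "hermitian_mat Ha'" "Ha' ** Ha' = Sa'" using psd_sqrt_prop[OF Sa'(1)] psd_herm by (auto simp: Ha'_def)
  have Hb': "hermitian_mat Hb'" "Hb' ** Hb' = Sb'" using psd_sqrt_prop[OF Sb'(1)] psd_herm by (auto simp: Hb'_def)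
  define G where "G = U ** tensor Ha Hb ** dagger U"
  have HG: "hermitian_mat G"
    using Ha(1) Hb(1) by (simp add: G_def hermitian_mat_def dagger_mult dagger_tensor matrix_mul_assoc)
  have GG: "G ** G = U ** tensor Sa Sb ** dagger U"
  proof -
    have "G ** G = U ** tensor Ha Hb ** (dagger U ** U) ** tensor Ha Hb ** dagger U"
      by (simp add: G_def matrix_mul_assoc)
    also have "\<dots> = U ** (tensor Ha Hb ** tensor Ha Hb) ** dagger U"
      by (simp add: UU matrix_mul_assoc)
    finally show ?thesis by (simp add: tensor_mult Ha Hb)
  qed
  have P1: "psd_mat (U ** tensor Sa Sb ** dagger U)" using herm_sq_psd[OF HG] GG by simp
  have P2: "psd_mat (tensor Sa' Sb')"
    using herm_sq_psd[OF herm_tensor[OF Ha'(1) Hb'(1)]] by (simp add: tensor_mult Ha' Hb')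
  have sq1: "(U ** tensor Sa Sb ** dagger U) ** (U ** tensor Sa Sb ** dagger U) = tensor \<alpha>' \<beta>'"
  proof -
    have "(U ** tensor Sa Sb ** dagger U) ** (U ** tensor Sa Sb ** dagger U) 
        = U ** tensor Sa Sb ** (dagger U ** U) ** tensor Sa Sb ** dagger U"
      by (simp add: matrix_mul_assoc)
    also have "\<dots> = U ** (tensor Sa Sb ** tensor Sa Sb) ** dagger U"
      by (simp add: UU matrix_mul_assoc)
    finally show ?thesis by (simp add: tensor_mult Sa Sb conj)
  qed
  have key: "U ** tensor Sa Sb ** dagger U = tensor Sa' Sb'"
    by (rule psd_sqrt_unique[OF P1 P2]) (simp add: sq1 tensor_mult Sa' Sb')
  have key1: "tensor Sa Sb ** dagger U = dagger U ** tensor Sa' Sb'"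
  proof -
    have "tensor Sa Sb ** dagger U = dagger U ** (U ** tensor Sa Sb ** dagger U)"
      by (simp add: matrix_mul_assoc UU)
    thus ?thesis by (simp add: key)
  qed
  have key2: "U ** tensor Sa Sb = tensor Sa' Sb' ** U"
  proof -
    have "U ** tensor Sa Sb = (U ** tensor Sa Sb ** dagger U) ** U"
      by (simp flip: matrix_mul_assoc add: UU)
    thus ?thesis by (simp add: key)
  qed
  have trB': "trace \<beta>' = 1" using dB' by (simp add: density_op_def)
  have Ealpha: "channel U \<beta> \<alpha> = \<alpha>'"
    by (simp add: channel_def conj ptrB_tensor trB')
  obtain iA where iA: "\<alpha>' ** iA = mat 1" using inv invertible_def by blast
  have "Sa' ** (Sa' ** iA) = mat 1" using iA Sa' by (simp add: matrix_mul_assoc)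
  hence invS: "invertible Sa'" using invertible_right_inverse by blast
  define R where "R = matrix_inv Sa'"
  have R: "Sa' ** R = mat 1" "R ** Sa' = mat 1" using matrix_inv_props[OF invS] by (auto simp: R_def)
  define F where "F Y = ptrB (tensor (mat 1) \<beta> ** (dagger U ** tensor Y (mat 1) ** U))" for Y
  have adj: "hs_adjoint (channel U \<beta>) = F"
  proof (rule hs_adjoint_eq, intro allI)
    fix X Y
    have "trace (channel U \<beta> X ** Y) = trace (Y ** ptrB (U ** tensor X \<beta> ** dagger U))"
      unfolding channel_def by (rule trace_mul_sym)
    also have "\<dots> = trace (tensor Y (mat 1) ** (U ** tensor X \<beta> ** dagger U))" by (rule trace_ptrB)
    also have "\<dots> = trace ((tensor Y (mat 1) ** U) ** (tensor X \<beta> ** dagger U))"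
      by (simp add: matrix_mul_assoc)
    also have "\<dots> = trace ((tensor X \<beta> ** dagger U) ** (tensor Y (mat 1) ** U))"
      by (rule trace_mul_sym)
    also have "\<dots> = trace (tensor X (mat 1) ** (tensor (mat 1) \<beta> ** (dagger U ** tensor Y (mat 1) ** U)))"
      by (simp add: matrix_mul_assoc tensor_mult)
    also have "\<dots> = trace (X ** F Y)" by (simp add: F_def trace_ptrB)
    finally show "trace (channel U \<beta> X ** Y) = trace (X ** F Y)" .
  qed
  have main: "petz (channel U \<beta>) \<alpha> X = ptrB (dagger U ** tensor X \<beta>' ** U)" for X
  proof -
    define N where "N = dagger U ** tensor (R ** X ** R) (mat 1) ** U"
    have "petz (channel U \<beta>) \<alpha> X = Sa ** F (R ** X ** R) ** Sa"
      by (simp add: petz_def Let_def Ealpha adj Sa_def R_def Sa'_def)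
    also have "F (R ** X ** R) = ptrB (tensor (mat 1) Sb ** (tensor (mat 1) Sb ** N))"
      by (simp add: F_def N_def tensor_mult Sb matrix_mul_assoc)
    also have "\<dots> = ptrB (tensor (mat 1) Sb ** N ** tensor (mat 1) Sb)"
      by (simp add: ptrB_cyc)
    also have "Sa ** \<dots> ** Sa = ptrB (tensor Sa (mat 1) ** (tensor (mat 1) Sb ** N ** tensor (mat 1) Sb) ** tensor Sa (mat 1))"
      by (simp add: ptrB_left_right)
    also have "tensor Sa (mat 1) ** (tensor (mat 1) Sb ** N ** tensor (mat 1) Sb) ** tensor Sa (mat 1)
       = tensor Sa Sb ** N ** tensor Sa Sb"
    proof -
      have t1: "tensor Sa (mat 1) ** tensor (mat 1) Sb = tensor Sa Sb"
        and t2: "tensor (mat 1) Sb ** tensor Sa (mat 1) = tensor Sa Sb" by (simp_all add: tensor_mult)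
      have "tensor Sa (mat 1) ** (tensor (mat 1) Sb ** N ** tensor (mat 1) Sb) ** tensor Sa (mat 1)
         = (tensor Sa (mat 1) ** tensor (mat 1) Sb) ** N ** (tensor (mat 1) Sb ** tensor Sa (mat 1))"
        by (simp add: matrix_mul_assoc)
      thus ?thesis by (simp only: t1 t2)
    qed
    also have "\<dots> = (tensor Sa Sb ** dagger U) ** tensor (R ** X ** R) (mat 1) ** (U ** tensor Sa Sb)"
      by (simp add: N_def matrix_mul_assoc)
    also have "\<dots> = dagger U ** (tensor Sa' Sb' ** tensor (R ** X ** R) (mat 1) ** tensor Sa' Sb') ** U"
      by (simp add: key1 key2 matrix_mul_assoc)
    also have "tensor Sa' Sb' ** tensor (R ** X ** R) (mat 1) ** tensor Sa' Sb' = tensor X \<beta>'"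
    proof -
      have "Sa' ** (R ** X ** R) ** Sa' = (Sa' ** R) ** X ** (R ** Sa')" by (simp add: matrix_mul_assoc)
      thus ?thesis by (simp add: tensor_mult R Sb')
    qed
    finally show ?thesis .
  qed
  show ?thesis using main dB' unfolding tabletop_reversible_def by blast
qed

end
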